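(* Let $n\ge5$, let $\{C_i,C_j,C_k\}$ be a critical triplet in $\mathcal C_{[n]}$, let $C\in\mathcal C_{[n]}$ with $C>F_{ijk}$, and let $A\in \hat S([n])$ with $A\gtrdot F_{ijk}$. Then $C$ covers $A$ in $\hat S([n])$ if and only if the edge $e(C)$ is incident to the vertex $v(A)$ in the tree $T(F_{ijk})$.
   Context: An $X$-tree is a pair $(T,\phi)$ with $T$ a finite tree and $\phi:X\to V(T)$ a map such that every vertex not in $\phi(X)$ has degree at least $3$; a vertex is labeled if it lies in $\phi(X)$. An $X$-forest is a set $\{(A,\mathcal T_A):A\in\pi\}$ where $\pi$ is a set partition of $X$ and each $\mathcal T_A$ is an $A$-tree. Contracting an edge $e=(u,v)$ removes $e$ and identifies $u,v$, the new vertex carrying the union of the labels. Deleting $e$ removes it without changing vertices; it is safe if each of $u,v$ is labeled or has degree greater than $3$. The Tuffley poset $S(X)$ is the set of $X$-forests with $\mathcal F'\le\mathcal F$ iff $\mathcal F'$ is obtained from $\mathcal F$ by a sequence of contractions and safe deletions; covers are single contractions or safe deletions. $\hat S(X)=S(X)\cup\{\hat0,\hat1\}$. $\mathcal C_{X}$ is the set of maximal elements of $S(X)$: trees with leaves labeled bijectively by $X$ and internal vertices unlabeled of degree $3$. Here $X=[n]$. NNI: for $C\in\mathcal C_X$ and an internal edge $\alpha=(u,v)$ separating subtrees $A,B$ at $u$ from $C',D$ at $v$, swapping $B$ with $C'$ or $B$ with $D$ is a nearest neighbor interchange over $\alpha$. A critical triplet is a triple $\{C_i,C_j,C_k\}$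 of elements of $\mathcal C_{[n]}$ such that: (1) $C_i$ has a leaf labeled $x$ whose leaf edge $e_x$ is adjacent to two internal edges $e_{x_1}$ and $e_{x_2}$; (2) $C_j\neq C_i$ and both $C_i,C_j$ cover $F_j$, the element obtained from $C_i$ by contracting $e_{x_1}$; (3) $C_k\ne C_i$ and both $C_i,C_k$ cover $F_k$, obtained from $C_i$ by contracting $e_{x_2}$. The element $F_{ijk}$ is obtained from $F_j$ by (safely) deleting the edge incident to the vertex labeled $x$ (equivalently, obtained in the same way from $F_k$); it consists of an isolated vertex labeled $x$ together with an $([n]\setminus\{x\})$-tree, denoted $T(F_{ijk})$. Every $A\gtrdot F_{ijk}$ in $\hat S([n])$ is obtained from $F_{ijk}$ by adding an edge between the isolated vertex $x$ and a unique vertex of $T(F_{ijk})$, denoted $v(A)$. Every $C\in\mathcal C_{[n]}$ with $C>F_{ijk}$ is obtained from $F_{ijk}$ by subdividing a unique edge of $T(F_{ijk})$, denoted $e(C)$, with a new vertex and joining that new vertex by an edge to the isolated vertex $x$. *)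

theory Defs
  imports Main
begin

text \<open>An X-forest is encoded as one finite graph (a disjoint union of trees) on
natural-number vertices, with a labelling map (only its values on X matter).
The trees of the forest are its connected components; the partition of X is
given by which labels lie in the same component.\<close>

record xf =
  verts :: "nat set"
  edges :: "nat set set"
  lab   :: "nat \<Rightarrow> nat"

definition degree :: "xf \<Rightarrow> nat \<Rightarrow> nat" where
  "degree F v = card {e \<in> edges F. v \<in> e}"

definition labeled :: "nat set \<Rightarrow> xf \<Rightarrow> nat \<Rightarrow> bool" where
  "labeled X F v \<longleftrightarrow> v \<in> lab F ` X"

definition reach :: "nat set set \<Rightarrow> nat \<Rightarrow> nat \<Rightarrow> bool" where
  "reach E = (\<lambda>a b. {a, b} \<in> E \<and> a \<noteq> b)\<^sup>*\<^sup>*"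

definition is_forest_graph :: "xf \<Rightarrow> bool" where
  "is_forest_graph F \<longleftrightarrow> finite (verts F) \<and>
     (\<forall>e\<in>edges F. \<exists>u v. u \<noteq> v \<and> e = {u, v} \<and> u \<in> verts F \<and> v \<in> verts F) \<and>
     (\<forall>u v. {u, v} \<in> edges F \<longrightarrow> u \<noteq> v \<longrightarrow> \<not> reach (edges F - {{u, v}}) u v)"

text \<open>X-forest: each component is an A-tree for the block A of labels it carries
(every component carries a label, so blocks are nonempty), unlabelled vertices
have degree at least 3.\<close>
definition xforest :: "nat set \<Rightarrow> xf \<Rightarrow> bool" where
  "xforest X F \<longleftrightarrow> is_forest_graph F \<and> lab F ` X \<subseteq> verts F \<and>
     (\<forall>v\<in>verts F. \<not> labeled X F v \<longrightarrow> degree F v \<ge> 3) \<and>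
     (\<forall>v\<in>verts F. \<exists>y\<in>X. reach (edges F) v (lab F y))"

definition fiso :: "nat set \<Rightarrow> xf \<Rightarrow> xf \<Rightarrow> bool" where
  "fiso X F G \<longleftrightarrow> (\<exists>f. bij_betw f (verts F) (verts G) \<and>
     edges G = (\<lambda>e. f ` e) ` edges F \<and> (\<forall>y\<in>X. f (lab F y) = lab G y))"

definition contract :: "xf \<Rightarrow> nat \<Rightarrow> nat \<Rightarrow> xf" where
  "contract F u v =
     (let r = (\<lambda>w. if w = v then u else w) in
      \<lparr> verts = verts F - {v},
        edges = (\<lambda>e. r ` e) ` (edges F - {{u, v}}),
        lab = r \<circ> lab F \<rparr>)"

definition delete :: "xf \<Rightarrow> nat \<Rightarrow> nat \<Rightarrow> xf" where
  "delete F u v = F\<lparr> edges := edges F - {{u, v}} \<rparr>"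

definition safe_del :: "nat set \<Rightarrow> xf \<Rightarrow> nat \<Rightarrow> nat \<Rightarrow> bool" where
  "safe_del X F u v \<longleftrightarrow> (labeled X F u \<or> degree F u > 3) \<and> (labeled X F v \<or> degree F v > 3)"

definition step :: "nat set \<Rightarrow> xf \<Rightarrow> xf \<Rightarrow> bool" where
  "step X F' F \<longleftrightarrow> (\<exists>u v. u \<noteq> v \<and> {u, v} \<in> edges F \<and>
      (F' = contract F u v \<or> (safe_del X F u v \<and> F' = delete F u v)))"

text \<open>Order of the Tuffley poset, on representatives (elements are iso classes).\<close>
definition fle :: "nat set \<Rightarrow> xf \<Rightarrow> xf \<Rightarrow> bool" where
  "fle X F' F \<longleftrightarrow> (\<exists>G. (step X)\<^sup>*\<^sup>* G F \<and> fiso X G F')"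

definition flt :: "nat set \<Rightarrow> xf \<Rightarrow> xf \<Rightarrow> bool" where
  "flt X F' F \<longleftrightarrow> fle X F' F \<and> \<not> fiso X F' F"

definition in_CX :: "nat set \<Rightarrow> xf \<Rightarrow> bool" where
  "in_CX X C \<longleftrightarrow> xforest X C \<and> \<not> (\<exists>G. xforest X G \<and> flt X C G)"

datatype 'a hat = Bot | Elem 'a | Top

definition in_hat :: "nat set \<Rightarrow> xf hat \<Rightarrow> bool" where
  "in_hat X a \<longleftrightarrow> (\<forall>p. a = Elem p \<longrightarrow> xforest X p)"

fun hle :: "nat set \<Rightarrow> xf hat \<Rightarrow> xf hat \<Rightarrow> bool" where
  "hle X Bot b = True"
| "hle X a Top = True"
| "hle X (Elem p) (Elem q) = fle X p q"
| "hle X _ _ = False"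

fun heq :: "nat set \<Rightarrow> xf hat \<Rightarrow> xf hat \<Rightarrow> bool" where
  "heq X Bot Bot = True"
| "heq X Top Top = True"
| "heq X (Elem p) (Elem q) = fiso X p q"
| "heq X _ _ = False"

definition hlt :: "nat set \<Rightarrow> xf hat \<Rightarrow> xf hat \<Rightarrow> bool" where
  "hlt X a b \<longleftrightarrow> hle X a b \<and> \<not> heq X a b"

definition hcovers :: "nat set \<Rightarrow> xf hat \<Rightarrow> xf hat \<Rightarrow> bool" where
  "hcovers X a b \<longleftrightarrow> in_hat X a \<and> in_hat X b \<and> hlt X b a \<and>
     \<not> (\<exists>c. in_hat X c \<and> hlt X b c \<and> hlt X c a)"

definition internal_edge :: "xf \<Rightarrow> nat set \<Rightarrow> bool" where
  "internal_edge C e \<longleftrightarrow> e \<in> edges C \<and> (\<forall>v\<in>e. degree C v \<noteq> 1)"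

text \<open>Critical triplet {Ci,Cj,Ck}: leaf lab Ci x with leaf edge {lab x, w};
the two internal edges adjacent to it are {w,a} (e_x1) and {w,b} (e_x2).\<close>
definition critical_triplet ::
  "nat set \<Rightarrow> xf \<Rightarrow> xf \<Rightarrow> xf \<Rightarrow> nat \<Rightarrow> nat \<Rightarrow> nat \<Rightarrow> nat \<Rightarrow> bool" where
  "critical_triplet X Ci Cj Ck x w a b \<longleftrightarrow>
     in_CX X Ci \<and> in_CX X Cj \<and> in_CX X Ck \<and> x \<in> X \<and>
     degree Ci (lab Ci x) = 1 \<and> {lab Ci x, w} \<in> edges Ci \<and> lab Ci x \<noteq> w \<and>
     internal_edge Ci {w, a} \<and> internal_edge Ci {w, b} \<and> w \<noteq> a \<and> w \<noteq> b \<and> a \<noteq> b \<and>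
     \<not> fiso X Cj Ci \<and>
     hcovers X (Elem Ci) (Elem (contract Ci w a)) \<and> hcovers X (Elem Cj) (Elem (contract Ci w a)) \<and>
     \<not> fiso X Ck Ci \<and>
     hcovers X (Elem Ci) (Elem (contract Ci w b)) \<and> hcovers X (Elem Ck) (Elem (contract Ci w b))"

text \<open>F_ijk: from F_j = contract e_x1, delete the edge at the vertex labelled x.\<close>
definition Fijk :: "xf \<Rightarrow> nat \<Rightarrow> nat \<Rightarrow> nat \<Rightarrow> xf" where
  "Fijk Ci x w a = delete (contract Ci w a) (lab (contract Ci w a) x) w"

definition add_edge :: "xf \<Rightarrow> nat \<Rightarrow> nat \<Rightarrow> xf" where
  "add_edge F p v = F\<lparr> edges := insert {p, v} (edges F) \<rparr>"

definition subdiv_attach :: "xf \<Rightarrow> nat \<Rightarrow> nat \<Rightarrow> nat \<Rightarrow> nat \<Rightarrow> xf" where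
  "subdiv_attach F p u1 u2 z =
     F\<lparr> verts := insert z (verts F),
        edges := (edges F - {{u1, u2}}) \<union> {{u1, z}, {z, u2}, {z, p}} \<rparr>"

end

theory Submission
  imports Defs
begin


definition wfX :: "nat set \<Rightarrow> xf \<Rightarrow> bool" where
  "wfX X H \<longleftrightarrow> finite (verts H) \<and> (\<forall>e\<in>edges H. e \<subseteq> verts H) \<and> lab H ` X \<subseteq> verts H"

definition isoby :: "nat set \<Rightarrow> (nat \<Rightarrow> nat) \<Rightarrow> xf \<Rightarrow> xf \<Rightarrow> bool" where
  "isoby X f F G \<longleftrightarrow> bij_betw f (verts F) (verts G) \<and>
     edges G = (\<lambda>e. f ` e) ` edges F \<and> (\<forall>y\<in>X. f (lab F y) = lab G y)"

lemma fiso_iff: "fiso X F G \<longleftrightarrow> (\<exists>f. isoby X f F G)"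
  unfolding fiso_def isoby_def by simp

lemma wfX_fin: "wfX X H \<Longrightarrow> finite (edges H)"
  unfolding wfX_def by (meson Pow_iff finite_Pow_iff finite_subset subsetI)

lemma xforest_edge: "xforest X H \<Longrightarrow> e \<in> edges H \<Longrightarrow> \<exists>u v. u \<noteq> v \<and> e = {u, v} \<and> u \<in> verts H \<and> v \<in> verts H"
  unfolding xforest_def is_forest_graph_def by (elim conjE) (drule bspec, assumption)

lemma xforest_wfX: "xforest X H \<Longrightarrow> wfX X H"
proof -
  assume a: "xforest X H"
  have "\<forall>e\<in>edges H. e \<subseteq> verts H"
  proof
    fix e assume "e \<in> edges H"
    then obtain u v where "e = {u,v}" "u \<in> verts H" "v \<in> verts H" using xforest_edge[OF a] by blast
    then show "e \<subseteq> verts H" by simp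
  qed
  moreover have "finite (verts H)" "lab H ` X \<subseteq> verts H" using a unfolding xforest_def is_forest_graph_def by simp_all
  ultimately show ?thesis unfolding wfX_def by simp
qed

lemma wfX_contract: "wfX X H \<Longrightarrow> u \<in> verts H \<Longrightarrow> u \<noteq> v \<Longrightarrow> wfX X (contract H u v)"
  unfolding wfX_def contract_def Let_def by auto

lemma wfX_delete: "wfX X H \<Longrightarrow> wfX X (delete H u v)"
  unfolding wfX_def delete_def by auto

lemma step_wfX:
  assumes "step X G H" "wfX X H"
  shows "wfX X G \<and> card (edges G) < card (edges H)"
proof -
  obtain u v where uv: "u \<noteq> v" "{u,v} \<in> edges H"
    "G = contract H u v \<or> (safe_del X H u v \<and> G = delete H u v)"
    using assms(1) unfolding step_def by blast
  have fin: "finite (edges H)" using assms(2) wfX_fin by blast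
  have u: "u \<in> verts H" using uv(2) assms(2) unfolding wfX_def by blast
  have lt: "card (edges H - {{u,v}}) < card (edges H)"
    using fin uv(2) by (rule card_Diff1_less)
  show ?thesis
  proof (cases "G = contract H u v")
    case True
    have "card (edges G) \<le> card (edges H - {{u,v}})"
      unfolding True contract_def Let_def by (simp add: card_image_le fin)
    then show ?thesis using lt True wfX_contract[OF assms(2) u uv(1)] by simp
  next
    case False
    then have "G = delete H u v" using uv(3) by blast
    then show ?thesis using lt wfX_delete[OF assms(2)] by (simp add: delete_def)
  qed
qed

lemma steps_wfX:
  assumes "(step X)\<^sup>*\<^sup>* G H" "wfX X H"
  shows "wfX X G \<and> (G = H \<or> card (edges G) < card (edges H))"
  using assms(1)
proof (induction rule: converse_rtranclp_induct)
  case base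
  then show ?case using assms(2) by simp
next
  case (step y z)
  have "wfX X y \<and> card (edges y) < card (edges z)" using step_wfX[OF step(1)] step(3) by blast
  then show ?case using step(3) by auto
qed

lemma iso_comp: "isoby X f H1 H2 \<Longrightarrow> isoby X g H2 H3 \<Longrightarrow> isoby X (g \<circ> f) H1 H3"
  unfolding isoby_def by (auto simp: bij_betw_trans image_comp image_image)

lemma iso_sym:
  assumes "wfX X H1" "isoby X f H1 H2"
  shows "isoby X (inv_into (verts H1) f) H2 H1"
proof -
  have b: "bij_betw f (verts H1) (verts H2)" and e: "edges H2 = (\<lambda>e. f ` e) ` edges H1"
    and l: "\<forall>y\<in>X. f (lab H1 y) = lab H2 y" using assms(2) unfolding isoby_def by auto
  have inj: "inj_on f (verts H1)" using b bij_betw_def by blast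
  have sub: "\<forall>e\<in>edges H1. e \<subseteq> verts H1" "lab H1 ` X \<subseteq> verts H1" using assms(1) unfolding wfX_def by auto
  have c: "\<And>e. e \<in> edges H1 \<Longrightarrow> inv_into (verts H1) f ` f ` e = e"
    using sub(1) inj by (simp add: inv_into_image_cancel)
  have "(\<lambda>e. inv_into (verts H1) f ` e) ` edges H2 = (\<lambda>e. inv_into (verts H1) f ` f ` e) ` edges H1"
    unfolding e by (rule image_image)
  also have "\<dots> = (\<lambda>e. e) ` edges H1" by (rule image_cong) (simp_all add: c)
  finally have "(\<lambda>e. inv_into (verts H1) f ` e) ` edges H2 = edges H1" by simp
  moreover have "\<forall>y\<in>X. inv_into (verts H1) f (lab H2 y) = lab H1 y"
    using l sub(2) inj by (metis image_subset_iff inv_into_f_f)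
  ultimately show ?thesis unfolding isoby_def using bij_betw_inv_into[OF b] by simp
qed

lemma iso_card_edges:
  assumes "wfX X H1" "isoby X f H1 H2"
  shows "card (edges H2) = card (edges H1)"
proof -
  have b: "bij_betw f (verts H1) (verts H2)" and e: "edges H2 = (\<lambda>e. f ` e) ` edges H1"
    using assms(2) unfolding isoby_def by auto
  have inj: "inj_on f (verts H1)" using b bij_betw_def by blast
  have sub: "\<forall>e\<in>edges H1. e \<subseteq> verts H1" using assms(1) unfolding wfX_def by auto
  have "inj_on (\<lambda>e. f ` e) (edges H1)"
    by (rule inj_onI) (use sub inj in \<open>simp add: inj_on_image_eq_iff\<close>)
  then show ?thesis unfolding e by (simp add: card_image)
qed

lemma iso_edgesat:
  assumes "wfX X H1" "isoby X f H1 H2" "s \<in> verts H1"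
  shows "{e\<in>edges H2. f s \<in> e} = (\<lambda>e. f ` e) ` {e\<in>edges H1. s \<in> e}"
proof -
  have b: "bij_betw f (verts H1) (verts H2)" and e: "edges H2 = (\<lambda>e. f ` e) ` edges H1"
    using assms(2) unfolding isoby_def by auto
  have inj: "inj_on f (verts H1)" using b bij_betw_def by blast
  have sub: "\<forall>e\<in>edges H1. e \<subseteq> verts H1" using assms(1) unfolding wfX_def by auto
  have m: "\<And>e. e \<in> edges H1 \<Longrightarrow> f s \<in> f ` e \<longleftrightarrow> s \<in> e" by (rule inj_on_image_mem_iff[OF inj assms(3)]) (use sub in blast)
  show ?thesis
  proof (rule set_eqI, rule iffI)
    fix e' assume "e' \<in> {e\<in>edges H2. f s \<in> e}"
    then obtain e where "e \<in> edges H1" "e' = f ` e" "f s \<in> f ` e" unfolding e by blast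
    then show "e' \<in> (\<lambda>e. f ` e) ` {e\<in>edges H1. s \<in> e}" using m by blast
  next
    fix e' assume "e' \<in> (\<lambda>e. f ` e) ` {e\<in>edges H1. s \<in> e}"
    then obtain e where "e \<in> edges H1" "e' = f ` e" "s \<in> e" by blast
    then show "e' \<in> {e\<in>edges H2. f s \<in> e}" unfolding e by blast
  qed
qed

lemma iso_degree:
  assumes "wfX X H1" "isoby X f H1 H2" "s \<in> verts H1"
  shows "degree H2 (f s) = degree H1 s"
proof -
  have b: "bij_betw f (verts H1) (verts H2)"
    using assms(2) unfolding isoby_def by auto
  have inj: "inj_on f (verts H1)" using b bij_betw_def by blast
  have sub: "\<forall>e\<in>edges H1. e \<subseteq> verts H1" using assms(1) unfolding wfX_def by auto
  have "inj_on (\<lambda>e. f ` e) {e\<in>edges H1. s \<in> e}"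
    by (rule inj_onI) (use sub inj in \<open>simp add: inj_on_image_eq_iff\<close>)
  then show ?thesis unfolding degree_def iso_edgesat[OF assms] by (simp add: card_image)
qed

lemma iso_labeled:
  assumes "wfX X H1" "isoby X f H1 H2" "s \<in> verts H1"
  shows "labeled X H2 (f s) \<longleftrightarrow> labeled X H1 s"
proof -
  have b: "bij_betw f (verts H1) (verts H2)" and l: "\<forall>y\<in>X. f (lab H1 y) = lab H2 y"
    using assms(2) unfolding isoby_def by auto
  have inj: "inj_on f (verts H1)" using b bij_betw_def by blast
  have sub: "lab H1 ` X \<subseteq> verts H1" using assms(1) unfolding wfX_def by auto
  show ?thesis unfolding labeled_def using l sub inj assms(3)
    by (auto simp: inj_on_eq_iff) (metis image_subset_iff inj_on_eq_iff rev_image_eqI)+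
qed

lemma iso_edge:
  assumes "wfX X H1" "isoby X f H1 H2" "s \<in> verts H1" "t \<in> verts H1"
  shows "{f s, f t} \<in> edges H2 \<longleftrightarrow> {s, t} \<in> edges H1"
proof -
  have b: "bij_betw f (verts H1) (verts H2)" and e: "edges H2 = (\<lambda>e. f ` e) ` edges H1"
    using assms(2) unfolding isoby_def by auto
  have inj: "inj_on f (verts H1)" using b bij_betw_def by blast
  have sub: "\<forall>e\<in>edges H1. e \<subseteq> verts H1" using assms(1) unfolding wfX_def by auto
  have "{f s, f t} = f ` {s,t}" by simp
  have st: "{s,t} \<subseteq> verts H1" using assms(3,4) by simp
  have q: "\<And>e. e \<in> edges H1 \<Longrightarrow> f ` e = f ` {s,t} \<longleftrightarrow> e = {s,t}"
    by (rule inj_on_image_eq_iff[OF inj]) (use sub st in blast)+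
  have "{f s, f t} \<in> edges H2 \<longleftrightarrow> (\<exists>e\<in>edges H1. f ` {s,t} = f ` e)"
    unfolding e \<open>{f s, f t} = f ` {s,t}\<close> by (rule image_iff)
  also have "\<dots> \<longleftrightarrow> (\<exists>e\<in>edges H1. e = {s,t})"
    by (rule bex_cong) (use q in auto)
  also have "\<dots> \<longleftrightarrow> {s,t} \<in> edges H1" by simp
  finally show ?thesis .
qed



lemma contract_simps:
  "verts (contract H u v) = verts H - {v}"
  "edges (contract H u v) = (\<lambda>e. (\<lambda>w. if w = v then u else w) ` e) ` (edges H - {{u,v}})"
  "lab (contract H u v) = (\<lambda>w. if w = v then u else w) \<circ> lab H"
  by (simp_all add: contract_def Let_def)

lemma delete_simps:
  "verts (delete H u v) = verts H" "edges (delete H u v) = edges H - {{u,v}}" "lab (delete H u v) = lab H"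
  by (simp_all add: delete_def)

lemma add_edge_simps:
  "verts (add_edge H u v) = verts H" "edges (add_edge H u v) = insert {u,v} (edges H)" "lab (add_edge H u v) = lab H"
  by (simp_all add: add_edge_def)

lemma subdiv_simps:
  "verts (subdiv_attach F p u1 u2 z) = insert z (verts F)"
  "edges (subdiv_attach F p u1 u2 z) = (edges F - {{u1, u2}}) \<union> {{u1, z}, {z, u2}, {z, p}}"
  "lab (subdiv_attach F p u1 u2 z) = lab F"
  by (simp_all add: subdiv_attach_def)

lemma iso_edges_diff:
  assumes "wfX X H1" "isoby X f H1 H2" "s \<in> verts H1" "t \<in> verts H1"
  shows "edges H2 - {{f s, f t}} = (\<lambda>e. f ` e) ` (edges H1 - {{s,t}})"
proof -
  have b: "bij_betw f (verts H1) (verts H2)" and e: "edges H2 = (\<lambda>e. f ` e) ` edges H1"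
    using assms(2) unfolding isoby_def by auto
  have inj: "inj_on f (verts H1)" using b bij_betw_def by blast
  have sub: "\<forall>e\<in>insert {s,t} (edges H1). e \<subseteq> verts H1" using assms(1,3,4) unfolding wfX_def by auto
  have ii: "inj_on (\<lambda>e. f ` e) (insert {s,t} (edges H1))"
    by (rule inj_onI) (use sub inj in \<open>simp add: inj_on_image_eq_iff\<close>)
  have "(\<lambda>e. f ` e) ` (edges H1 - {{s,t}}) = (\<lambda>e. f ` e) ` edges H1 - (\<lambda>e. f ` e) ` {{s,t}}"
    by (rule inj_on_image_set_diff[OF ii]) auto
  then show ?thesis unfolding e by simp
qed

lemma iso_contract:
  assumes "wfX X H1" "isoby X f H1 H2" "s \<in> verts H1" "t \<in> verts H1" "s \<noteq> t"
  shows "isoby X f (contract H1 s t) (contract H2 (f s) (f t))"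
proof -
  have b: "bij_betw f (verts H1) (verts H2)" and e: "edges H2 = (\<lambda>e. f ` e) ` edges H1"
    and l: "\<forall>y\<in>X. f (lab H1 y) = lab H2 y" using assms(2) unfolding isoby_def by auto
  have inj: "inj_on f (verts H1)" using b bij_betw_def by blast
  have sub: "\<forall>e\<in>edges H1. e \<subseteq> verts H1" "lab H1 ` X \<subseteq> verts H1" using assms(1) unfolding wfX_def by auto
  define r1 where "r1 = (\<lambda>w. if w = t then s else w)"
  define r2 where "r2 = (\<lambda>w. if w = f t then f s else w)"
  have comm: "\<And>w. w \<in> verts H1 \<Longrightarrow> r2 (f w) = f (r1 w)"
    unfolding r1_def r2_def using inj assms(4) by (auto simp: inj_on_eq_iff)
  have bv: "bij_betw f (verts H1 - {t}) (verts H2 - {f t})"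
  proof -
    have "inj_on f (verts H1 - {t})" using inj by (rule inj_on_subset) auto
    moreover have "f ` (verts H1 - {t}) = f ` verts H1 - f ` {t}"
      by (rule inj_on_image_set_diff[OF inj]) (use assms(4) in auto)
    ultimately show ?thesis using b unfolding bij_betw_def by simp
  qed
  have ed: "edges (contract H2 (f s) (f t)) = (\<lambda>e. f ` e) ` edges (contract H1 s t)"
  proof -
    have "edges (contract H2 (f s) (f t)) = (\<lambda>e. r2 ` e) ` ((\<lambda>e. f ` e) ` (edges H1 - {{s,t}}))"
      unfolding contract_simps r2_def iso_edges_diff[OF assms(1-4)] by simp
    also have "\<dots> = (\<lambda>e. r2 ` f ` e) ` (edges H1 - {{s,t}})" by (simp add: image_image)
    also have "\<dots> = (\<lambda>e. f ` r1 ` e) ` (edges H1 - {{s,t}})"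
    proof (rule image_cong[OF refl])
      fix e assume "e \<in> edges H1 - {{s,t}}"
      then have "e \<subseteq> verts H1" using sub by auto
      then show "r2 ` f ` e = f ` r1 ` e" using comm by (auto simp: image_image image_iff) (metis comm subsetD)+
    qed
    also have "\<dots> = (\<lambda>e. f ` e) ` edges (contract H1 s t)"
      unfolding contract_simps r1_def by (simp add: image_image)
    finally show ?thesis .
  qed
  have lb: "\<forall>y\<in>X. f (lab (contract H1 s t) y) = lab (contract H2 (f s) (f t)) y"
  proof
    fix y assume y: "y \<in> X"
    then have "lab H1 y \<in> verts H1" using sub by auto
    then have "f (r1 (lab H1 y)) = r2 (f (lab H1 y))" using comm by simp
    then show "f (lab (contract H1 s t) y) = lab (contract H2 (f s) (f t)) y"
      unfolding contract_simps r1_def r2_def using l y by simp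
  qed
  show ?thesis unfolding isoby_def using bv ed lb by (simp add: contract_simps)
qed

lemma iso_delete:
  assumes "wfX X H1" "isoby X f H1 H2" "s \<in> verts H1" "t \<in> verts H1"
  shows "isoby X f (delete H1 s t) (delete H2 (f s) (f t))"
  using assms(2) iso_edges_diff[OF assms] unfolding isoby_def delete_simps by simp

lemma contract_swap:
  assumes "s \<in> verts H" "t \<in> verts H" "s \<noteq> t"
  shows "isoby X (\<lambda>w. if w = t then s else w) (contract H t s) (contract H s t)"
proof -
  define phi where "phi = (\<lambda>w. if w = t then s else w)"
  have pw: "\<And>w. phi ((\<lambda>w. if w = s then t else w) w) = (\<lambda>w. if w = t then s else w) w"
    unfolding phi_def using assms(3) by auto
  have bv: "bij_betw phi (verts H - {s}) (verts H - {t})"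
    unfolding bij_betw_def inj_on_def phi_def using assms by (auto simp: image_iff)
  have "edges (contract H s t) = (\<lambda>e. phi ` e) ` edges (contract H t s)"
  proof -
    have pe: "(\<lambda>x. phi (if x = s then t else x)) = (\<lambda>w. if w = t then s else w)"
      by (rule ext) (rule pw)
    have ts: "{t,s} = {s,t}" by blast
    show ?thesis unfolding contract_simps ts image_image pe ..
  qed
  moreover have "\<forall>y\<in>X. phi (lab (contract H t s) y) = lab (contract H s t) y"
    unfolding contract_simps using pw by simp
  ultimately show ?thesis unfolding isoby_def phi_def[symmetric] using bv by (simp add: contract_simps)
qed



fun pw :: "(nat \<Rightarrow> nat \<Rightarrow> nat) \<Rightarrow> nat \<Rightarrow> nat \<Rightarrow> nat \<times> nat" where
  "pw nx a 0 = (a, nx a a)"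
| "pw nx a (Suc k) = (snd (pw nx a k), nx (fst (pw nx a k)) (snd (pw nx a k)))"

lemma reach_refl: "reach E a a"
  unfolding reach_def by simp

lemma reach_snoc: "reach E a b \<Longrightarrow> {b,c} \<in> E \<Longrightarrow> b \<noteq> c \<Longrightarrow> reach E a c"
  unfolding reach_def by (rule rtranclp.rtrancl_into_rtrancl) auto

lemma xforest_acyc: "xforest X F \<Longrightarrow> {a,b} \<in> edges F \<Longrightarrow> a \<noteq> b \<Longrightarrow> \<not> reach (edges F - {{a,b}}) a b"
  unfolding xforest_def is_forest_graph_def by blast

lemma xforest_e2: "xforest X F \<Longrightarrow> {a,b} \<in> edges F \<Longrightarrow> a \<noteq> b \<and> a \<in> verts F \<and> b \<in> verts F"
proof -
  assume F: "xforest X F" "{a,b} \<in> edges F"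
  obtain u v where "u \<noteq> v" "{a,b} = {u, v}" "u \<in> verts F" "v \<in> verts F"
    using xforest_edge[OF F] by blast
  then show ?thesis by (auto simp: doubleton_eq_iff)
qed

lemma xforest_edge_other: "xforest X F \<Longrightarrow> e \<in> edges F \<Longrightarrow> c \<in> e \<Longrightarrow> \<exists>w. e = {c, w}"
proof -
  assume F: "xforest X F" "e \<in> edges F" "c \<in> e"
  obtain u v where "u \<noteq> v" "e = {u, v}" using xforest_edge[OF F(1,2)] by blast
  then show ?thesis using F(3) by (auto simp: insert_commute)
qed

lemma xforest_deg: "xforest X F \<Longrightarrow> v \<in> verts F \<Longrightarrow> \<not> labeled X F v \<Longrightarrow> degree F v \<ge> 3"
  unfolding xforest_def by (elim conjE) (drule bspec, assumption, simp)

lemma rigid: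
  assumes F: "xforest X F" and g: "bij_betw g (verts F) (verts F)"
    and EE: "edges F = (\<lambda>e. g ` e) ` edges F" and L: "\<forall>y\<in>X. g (lab F y) = lab F y"
  shows "\<forall>t\<in>verts F. g t = t"
proof (rule ccontr)
  define V where "V = verts F"
  define E where "E = edges F"
  define U where "U = {t\<in>V. g t \<noteq> t}"
  assume "\<not> (\<forall>t\<in>verts F. g t = t)"
  then obtain t0 where t0: "t0 \<in> U" unfolding U_def V_def by blast
  have wf: "wfX X F" using F by (rule xforest_wfX)
  have finV: "finite V" using wf unfolding wfX_def V_def by simp
  have finU: "finite U" unfolding U_def using finV by simp
  have e2: "\<And>a b. {a,b} \<in> E \<Longrightarrow> a \<noteq> b \<and> a \<in> V \<and> b \<in> V"
    unfolding E_def V_def using xforest_e2[OF F] by blast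
  have acyc: "\<And>a b. {a,b} \<in> E \<Longrightarrow> \<not> reach (E - {{a,b}}) a b"
  proof -
    fix a b assume ab: "{a,b} \<in> E"
    then have "a \<noteq> b" using e2 by blast
    then show "\<not> reach (E - {{a,b}}) a b" using xforest_acyc[OF F] ab unfolding E_def by blast
  qed
  have gE: "\<And>a b. {a,b} \<in> E \<Longrightarrow> {g a, g b} \<in> E"
  proof -
    fix a b assume "{a,b} \<in> E"
    then have "g ` {a,b} \<in> (\<lambda>e. g ` e) ` edges F" unfolding E_def by blast
    then show "{g a, g b} \<in> E" unfolding E_def using EE by simp
  qed
  have inj: "inj_on g V" using g unfolding V_def bij_betw_def by blast
  have nb: "\<And>c q. c \<in> U \<Longrightarrow> \<exists>w\<in>U. {c,w} \<in> E \<and> w \<noteq> q"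
  proof -
    fix c q assume c: "c \<in> U"
    have cV: "c \<in> V" and gc: "g c \<noteq> c" using c unfolding U_def by auto
    have unl: "\<not> labeled X F c"
    proof
      assume "labeled X F c"
      then obtain y where "y \<in> X" "c = lab F y" unfolding labeled_def by blast
      then show False using L gc by simp
    qed
    have deg: "degree F c \<ge> 3" using xforest_deg[OF F] cV unl unfolding V_def by blast
    define N where "N = {w. {c,w} \<in> E}"
    have NV: "N \<subseteq> V" unfolding N_def using e2 by blast
    have finN: "finite N" using NV finV finite_subset by blast
    have setN: "{e \<in> edges F. c \<in> e} = (\<lambda>w. {c,w}) ` N"
    proof (rule set_eqI, rule iffI)
      fix e assume "e \<in> {e \<in> edges F. c \<in> e}"
      then have "e \<in> edges F" "c \<in> e" by auto
      then obtain w where "e = {c,w}" using xforest_edge_other[OF F] by blast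
      then show "e \<in> (\<lambda>w. {c,w}) ` N" unfolding N_def E_def using \<open>e \<in> edges F\<close> by blast
    next
      fix e assume "e \<in> (\<lambda>w. {c,w}) ` N"
      then show "e \<in> {e \<in> edges F. c \<in> e}" unfolding N_def E_def by blast
    qed
    have injN: "inj_on (\<lambda>w. {c,w}) N"
    proof (rule inj_onI)
      fix w1 w2 assume "w1 \<in> N" "w2 \<in> N" "{c,w1} = {c,w2}"
      moreover have "c \<noteq> w1" "c \<noteq> w2" using e2 \<open>w1 \<in> N\<close> \<open>w2 \<in> N\<close> unfolding N_def by auto
      ultimately show "w1 = w2" by (auto simp: doubleton_eq_iff)
    qed
    have cardN: "card N \<ge> 3" using deg unfolding degree_def setN card_image[OF injN] .
    define Fx where "Fx = {w. g w = w}"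
    have fix1: "\<forall>a\<in>N \<inter> Fx. \<forall>b\<in>N \<inter> Fx. a = b"
    proof (intro ballI, rule ccontr)
      fix a b assume a: "a \<in> N \<inter> Fx" and b: "b \<in> N \<inter> Fx" and ab: "a \<noteq> b"
      have ca: "{c,a} \<in> E" and cb: "{c,b} \<in> E" and ga: "g a = a" and gb: "g b = b"
        using a b unfolding N_def Fx_def by auto
      have aV: "a \<in> V" "c \<noteq> a" using e2[OF ca] by auto
      have bV: "b \<in> V" "c \<noteq> b" using e2[OF cb] by auto
      have gca: "{g c, a} \<in> E" using gE[OF ca] ga by simp
      have gcb: "{b, g c} \<in> E" using gE[OF cb] gb by (simp add: insert_commute)
      have gc_a: "g c \<noteq> a"
      proof
        assume "g c = a"
        then have "g c = g a" using ga by simp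
        then have "c = a" using inj cV aV(1) by (simp add: inj_on_eq_iff)
        then show False using aV(2) by simp
      qed
      have gc_b: "g c \<noteq> b"
      proof
        assume "g c = b"
        then have "g c = g b" using gb by simp
        then have "c = b" using inj cV bV(1) by (simp add: inj_on_eq_iff)
        then show False using bV(2) by simp
      qed
      have n1: "{c,b} \<noteq> {c,a}" using ab bV(2) by (auto simp: doubleton_eq_iff)
      have n2: "{b, g c} \<noteq> {c,a}" using ab bV(2) by (auto simp: doubleton_eq_iff)
      have n3: "{g c, a} \<noteq> {c,a}" using gc gc_a by (auto simp: doubleton_eq_iff)
      have r1: "reach (E - {{c,a}}) c b"
        by (rule reach_snoc[OF reach_refl]) (use cb n1 bV(2) in auto)
      have r2: "reach (E - {{c,a}}) c (g c)"
        by (rule reach_snoc[OF r1]) (use gcb n2 gc_b in auto)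
      have "reach (E - {{c,a}}) c a"
        by (rule reach_snoc[OF r2]) (use gca n3 gc_a in auto)
      then show False using acyc[OF ca] by simp
    qed
    have c1: "card (N \<inter> Fx) \<le> 1"
      using fix1 finN by (simp add: card_le_Suc0_iff_eq)
    have "N \<subseteq> (N - {q} - Fx) \<union> {q} \<union> (N \<inter> Fx)" by blast
    then have "card N \<le> card ((N - {q} - Fx) \<union> {q} \<union> (N \<inter> Fx))"
      by (rule card_mono[rotated]) (use finN in simp)
    also have "\<dots> \<le> card (N - {q} - Fx) + card {q} + card (N \<inter> Fx)"
      by (meson add_le_mono card_Un_le le_refl order_trans)
    finally have "card (N - {q} - Fx) \<ge> 1" using cardN c1 by simp
    then obtain w where w: "w \<in> N - {q} - Fx" by (metis card.empty ex_in_conv not_one_le_zero)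
    then have "w \<in> U" unfolding U_def Fx_def using NV by auto
    then show "\<exists>w\<in>U. {c,w} \<in> E \<and> w \<noteq> q" using w unfolding N_def by blast
  qed
  have "\<forall>q c. \<exists>w. c \<in> U \<longrightarrow> w \<in> U \<and> {c,w} \<in> E \<and> w \<noteq> q" using nb by blast
  then have "\<forall>q. \<exists>h. \<forall>c. c \<in> U \<longrightarrow> h c \<in> U \<and> {c,h c} \<in> E \<and> h c \<noteq> q"
    by (intro allI choice) blast
  then have "\<exists>nx. \<forall>q. \<forall>c. c \<in> U \<longrightarrow> nx q c \<in> U \<and> {c, nx q c} \<in> E \<and> nx q c \<noteq> q"
    by (rule choice)
  then obtain nx where nx: "\<And>q c. c \<in> U \<Longrightarrow> nx q c \<in> U \<and> {c, nx q c} \<in> E \<and> nx q c \<noteq> q"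
    by blast
  define s where "s k = fst (pw nx t0 k)" for k
  have s0: "s 0 = t0" unfolding s_def by simp
  have sS: "s (Suc k) = snd (pw nx t0 k)" for k unfolding s_def by simp
  have s1: "s (Suc 0) = nx t0 t0" unfolding sS by simp
  have sSS: "s (Suc (Suc k)) = nx (s k) (s (Suc k))" for k
    unfolding sS by (simp add: s_def)
  have walk: "s k \<in> U \<and> s (Suc k) \<in> U \<and> {s k, s (Suc k)} \<in> E" for k
  proof (induction k)
    case 0
    then show ?case using s0 s1 nx[OF t0] t0 by simp
  next
    case (Suc k)
    then show ?case using sSS[of k] nx[of "s (Suc k)" "s k"] by simp
  qed
  have nbk: "s (Suc (Suc k)) \<noteq> s k" for k using sSS[of k] nx walk by simp
  have neq: "s (Suc k) \<noteq> s k" for k using e2[OF walk[of k, THEN conjunct2, THEN conjunct2]] by auto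
  have "\<exists>i j. i < j \<and> s i = s j"
  proof (rule ccontr)
    assume H: "\<not> (\<exists>i j. i < j \<and> s i = s j)"
    have "inj_on s {..card U}"
    proof (rule inj_onI)
      fix i j assume "s i = s j"
      moreover have H': "\<And>i j. i < j \<Longrightarrow> s i \<noteq> s j" using H by blast
      ultimately show "i = j" by (metis H' linorder_neqE_nat)
    qed
    then have "card (s ` {..card U}) = Suc (card U)" by (simp add: card_image)
    moreover have "s ` {..card U} \<subseteq> U" using walk by blast
    ultimately have "Suc (card U) \<le> card U" using card_mono[OF finU] by metis
    then show False by simp
  qed
  then have ex: "\<exists>j. \<exists>i<j. s i = s j" by blast
  define j0 where "j0 = (LEAST j. \<exists>i<j. s i = s j)"
  obtain i0 where i0: "i0 < j0" "s i0 = s j0" using LeastI_ex[OF ex] unfolding j0_def by blast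
  have mini: "\<And>j i. j < j0 \<Longrightarrow> i < j \<Longrightarrow> s i \<noteq> s j"
    unfolding j0_def using not_less_Least by blast
  have j1: "j0 \<noteq> Suc i0" using neq[of i0] i0(2) by auto
  have j2: "j0 \<noteq> Suc (Suc i0)" using nbk[of i0] i0(2) by auto
  define e where "e = {s i0, s (Suc i0)}"
  have claim: "Suc i0 + m \<le> j0 \<longrightarrow> reach (E - {e}) (s (Suc i0)) (s (Suc i0 + m))" for m
  proof (induction m)
    case 0
    then show ?case by (simp add: reach_refl)
  next
    case (Suc m)
    show ?case
    proof
      assume le: "Suc i0 + Suc m \<le> j0"
      define k where "k = Suc i0 + m"
      have kl: "k < j0" using le unfolding k_def by simp
      have r: "reach (E - {e}) (s (Suc i0)) (s k)" using Suc le unfolding k_def by simp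
      have ne: "{s k, s (Suc k)} \<noteq> e"
      proof
        assume eq: "{s k, s (Suc k)} = e"
        show False
        proof (cases m)
          case 0
          then have "k = Suc i0" unfolding k_def by simp
          then have "{s (Suc i0), s (Suc (Suc i0))} = {s i0, s (Suc i0)}" using eq unfolding e_def by simp
          then have "s (Suc (Suc i0)) = s i0" using neq[of "Suc i0"] by (auto simp: doubleton_eq_iff)
          then show False using nbk[of i0] by simp
        next
          case (Suc m')
          have "s k \<in> {s i0, s (Suc i0)}" using eq unfolding e_def by blast
          moreover have "s i0 \<noteq> s k" using mini[OF kl] Suc unfolding k_def by simp
          moreover have "s (Suc i0) \<noteq> s k" using mini[OF kl] Suc unfolding k_def by simp
          ultimately show False by auto
        qed
      qed
      have "reach (E - {e}) (s (Suc i0)) (s (Suc k))"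
        using reach_snoc[OF r, of "s (Suc k)"] walk[of k] ne neq[of k] by auto
      then show "reach (E - {e}) (s (Suc i0)) (s (Suc i0 + Suc m))" unfolding k_def by simp
    qed
  qed
  have "reach (E - {e}) (s (Suc i0)) (s j0)"
    using claim[of "j0 - Suc i0"] i0(1) by simp
  then have "reach (E - {{s (Suc i0), s i0}}) (s (Suc i0)) (s i0)"
    unfolding e_def using i0(2) by (simp add: insert_commute)
  moreover have "{s (Suc i0), s i0} \<in> E" using walk[of i0] by (simp add: insert_commute)
  ultimately show False using acyc by blast
qed



lemma card3: "card {a, b, c::'a} \<le> 3"
  by (auto simp: card_insert_if)

locale setting =
  fixes X F p u1 u2 z
  assumes F: "xforest X F" and pX: "p \<in> lab F ` X"
    and isol: "\<forall>e\<in>edges F. p \<notin> e"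
    and e12: "{u1,u2} \<in> edges F" and znot: "z \<notin> verts F"
begin

lemma wfF: "wfX X F" using F by (rule xforest_wfX)
lemma pV: "p \<in> verts F" using wfF pX unfolding wfX_def by blast
lemma uV: "u1 \<in> verts F" "u2 \<in> verts F" "u1 \<noteq> u2" using xforest_e2[OF F e12] by auto
lemma pu: "p \<noteq> u1" "p \<noteq> u2" using isol e12 by auto
lemma zne: "z \<noteq> p" "z \<noteq> u1" "z \<noteq> u2" using znot pV uV by auto
lemma labF: "y \<in> X \<Longrightarrow> lab F y \<in> verts F" using wfF unfolding wfX_def by blast
lemma edgeF: "e \<in> edges F \<Longrightarrow> e \<subseteq> verts F" using wfF unfolding wfX_def by blast
lemma finE: "finite (edges F)" using wfF by (rule wfX_fin)

abbreviation "S \<equiv> subdiv_attach F p u1 u2 z"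

lemma S_wf: "wfX X S"
  using wfF pV uV unfolding wfX_def subdiv_simps by auto

lemma new_notF: "{u1,z} \<notin> edges F" "{z,u2} \<notin> edges F" "{z,p} \<notin> edges F"
  using edgeF znot by blast+

lemma S_card: "card (edges S) = card (edges F) + 2"
proof -
  have d: "(edges F - {{u1, u2}}) \<inter> {{u1, z}, {z, u2}, {z, p}} = {}" using new_notF by auto
  have c3: "card {{u1, z}, {z, u2}, {z, p}} = 3"
    using uV(3) pu zne by (auto simp: doubleton_eq_iff card_insert_if)
  have "card (edges F - {{u1, u2}}) = card (edges F) - 1" using finE e12 by simp
  moreover have "card (edges F) \<ge> 1" using finE e12 by (metis One_nat_def card_0_eq empty_iff less_one not_less)
  moreover have "card (edges S) = card (edges F - {{u1,u2}}) + card {{u1, z}, {z, u2}, {z, p}}"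
    unfolding subdiv_simps by (rule card_Un_disjoint) (use finE d in auto)
  ultimately show ?thesis using c3 by simp
qed

lemma Av_card: "card (edges (add_edge F p v)) = card (edges F) + 1"
proof -
  have "{p,v} \<notin> edges F" using isol by blast
  then show ?thesis unfolding add_edge_simps using finE by simp
qed

lemma Av_wf: "v \<in> verts F \<Longrightarrow> wfX X (add_edge F p v)"
  using wfF pV unfolding wfX_def add_edge_simps by auto

lemma Av_at_p: "{e \<in> edges (add_edge F p v). p \<in> e} = {{p,v}}"
  unfolding add_edge_simps using isol by auto

lemma S_at_z: "{e \<in> edges S. z \<in> e} = {{u1, z}, {z, u2}, {z, p}}"
  unfolding subdiv_simps using edgeF znot by auto

lemma S_z_unlab: "\<not> labeled X S z"
  unfolding labeled_def subdiv_simps using labF znot by auto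

lemma S_deg_z: "degree S z = 3"
  unfolding degree_def S_at_z using uV(3) pu zne by (auto simp: doubleton_eq_iff card_insert_if)

lemma contract_S_u1: "isoby X id (add_edge F p u1) (contract S u1 z)"
proof -
  define r where "r = (\<lambda>w. if w = z then u1 else w)"
  have ES: "edges S - {{u1,z}} = (edges F - {{u1, u2}}) \<union> {{z, u2}, {z, p}}"
    unfolding subdiv_simps using new_notF uV(3) pu zne by (auto simp: doubleton_eq_iff)
  have rF: "\<And>e. e \<in> edges F \<Longrightarrow> r ` e = e" unfolding r_def using edgeF znot by force
  have "(\<lambda>e. r ` e) ` (edges S - {{u1,z}}) = (\<lambda>e. r ` e) ` (edges F - {{u1, u2}}) \<union> {{u1, u2}, {u1, p}}"
    unfolding ES r_def using zne by auto
  also have "(\<lambda>e. r ` e) ` (edges F - {{u1, u2}}) = edges F - {{u1, u2}}"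
    using rF by (simp add: image_cong[OF refl rF])
  finally have "edges (contract S u1 z) = insert {p,u1} (edges F)"
    unfolding contract_simps r_def[symmetric] using e12 by (auto simp: insert_commute)
  moreover have "verts (contract S u1 z) = verts F" unfolding contract_simps subdiv_simps using znot by auto
  moreover have "\<forall>y\<in>X. lab (contract S u1 z) y = lab F y"
    unfolding contract_simps subdiv_simps using labF znot by auto
  ultimately show ?thesis unfolding isoby_def add_edge_simps by (simp add: bij_betw_id)
qed

lemma key_contra:
  assumes v: "v \<in> verts F" "v \<noteq> p"
    and G: "wfX X G" "isoby X k G (add_edge F p v)"
    and pG: "p \<in> verts G" and zG: "z \<in> verts G" and x: "x \<in> X" "lab G x = p" "lab F x = p"
    and atp: "{e\<in>edges G. p \<in> e} = {{z,p}}"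
    and zl: "\<not> labeled X G z" and dz: "degree G z \<le> 3"
  shows False
proof -
  have b: "bij_betw k (verts G) (verts F)" and l: "\<forall>y\<in>X. k (lab G y) = lab F y"
    using G(2) unfolding isoby_def add_edge_simps by auto
  have inj: "inj_on k (verts G)" using b bij_betw_def by blast
  have kp: "k p = p" using l x by auto
  have "{{p,v}} = (\<lambda>e. k ` e) ` {{z,p}}"
    using iso_edgesat[OF G pG] unfolding kp Av_at_p atp by simp
  then have "{p,v} = {k z, p}" using kp by simp
  moreover have "k z \<noteq> p" using inj zG pG zne(1) kp by (metis inj_on_eq_iff)
  ultimately have kz: "k z = v" by (auto simp: doubleton_eq_iff)
  have "\<not> labeled X (add_edge F p v) v" using iso_labeled[OF G zG] zl kz by simp
  then have "\<not> labeled X F v" unfolding labeled_def add_edge_simps .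
  then have d3: "degree F v \<ge> 3" using xforest_deg[OF F v(1)] by simp
  have "{e \<in> edges (add_edge F p v). v \<in> e} = insert {p,v} {e \<in> edges F. v \<in> e}"
    unfolding add_edge_simps by auto
  moreover have "{p,v} \<notin> {e \<in> edges F. v \<in> e}" using isol by auto
  moreover have "finite {e \<in> edges F. v \<in> e}" using finE by simp
  ultimately have "degree (add_edge F p v) v = degree F v + 1" unfolding degree_def by simp
  moreover have "degree (add_edge F p v) (k z) = degree G z" using iso_degree[OF G zG] .
  ultimately show False using d3 dz kz by simp
qed

lemma add_edge_rigid:
  assumes u: "u \<in> verts F" "u \<noteq> p" and v: "v \<in> verts F" "v \<noteq> p"
    and g: "isoby X g (add_edge F p u) (add_edge F p v)"
  shows "u = v"
proof -
  have wu: "wfX X (add_edge F p u)" using Av_wf u(1) .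
  have b: "bij_betw g (verts F) (verts F)" and l: "\<forall>y\<in>X. g (lab F y) = lab F y"
    and e: "insert {p,v} (edges F) = (\<lambda>e. g ` e) ` insert {p,u} (edges F)"
    using g unfolding isoby_def add_edge_simps by auto
  have inj: "inj_on g (verts F)" using b bij_betw_def by blast
  have gp: "g p = p" using l pX by auto
  have pVu: "p \<in> verts (add_edge F p u)" using pV by (simp add: add_edge_simps)
  have "{{p,v}} = (\<lambda>e. g ` e) ` {{p,u}}"
    using iso_edgesat[OF wu g pVu] unfolding gp Av_at_p by simp
  then have "{p,v} = {p, g u}" using gp by simp
  moreover have "g u \<noteq> p" using inj u pV gp by (metis inj_on_eq_iff)
  ultimately have gu: "g u = v" by (auto simp: doubleton_eq_iff)
  have n1: "{p,v} \<notin> edges F" using isol by auto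
  have n2: "{p,v} \<notin> (\<lambda>e. g ` e) ` edges F"
  proof
    assume "{p,v} \<in> (\<lambda>e. g ` e) ` edges F"
    then obtain e where e1: "e \<in> edges F" "g ` e = {p,v}" by blast
    have "g ` {p,u} = {p,v}" using gp gu by simp
    then have "g ` e = g ` {p,u}" using e1 by simp
    moreover have sub2: "{p,u} \<subseteq> verts F" using pV u(1) by simp
    ultimately have "e = {p,u}" using inj_on_image_eq_iff[OF inj edgeF[OF e1(1)] sub2] by blast
    then show False using e1 isol by auto
  qed
  have "insert {p,v} (edges F) = insert {p,v} ((\<lambda>e. g ` e) ` edges F)"
    using e gp gu by simp
  then have EE: "edges F = (\<lambda>e. g ` e) ` edges F" using n1 n2 by (simp add: insert_ident)
  have "\<forall>t\<in>verts F. g t = t" using rigid[OF F b EE l] .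
  then show ?thesis using gu u(1) by simp
qed

end

lemma subdiv_sym: "subdiv_attach F p u1 u2 z = subdiv_attach F p u2 u1 z"
  unfolding subdiv_attach_def by (simp add: insert_commute)



context setting begin

lemma S_edge_cases: "e \<in> edges S \<Longrightarrow> (e \<in> edges F \<and> e \<noteq> {u1,u2}) \<or> e = {u1,z} \<or> e = {z,u2} \<or> e = {z,p}"
  unfolding subdiv_simps by auto

lemma S_at_p: assumes e: "e \<in> edges S" "p \<in> e" shows "e = {z,p}"
proof -
  have "e \<notin> edges F" using isol e(2) by blast
  then have "e = {u1,z} \<or> e = {z,u2} \<or> e = {z,p}" using S_edge_cases[OF e(1)] by blast
  moreover have "p \<notin> {u1,z}" "p \<notin> {z,u2}" using pu zne by auto
  ultimately show ?thesis using e(2) by blast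
qed

lemma caseF_contract:
  assumes v: "v \<in> verts F" "v \<noteq> p" and x: "x \<in> X" "lab F x = p"
    and st: "{s,t} \<in> edges F" "{s,t} \<noteq> {u1,u2}" "s \<noteq> t"
    and k: "isoby X k (contract S s t) (add_edge F p v)"
  shows False
proof -
  define r where "r = (\<lambda>w. if w = t then s else w)"
  have sF: "s \<in> verts F" "t \<in> verts F" using edgeF[OF st(1)] by auto
  have sp: "s \<noteq> p" "t \<noteq> p" using isol st(1) by auto
  have sz: "s \<noteq> z" "t \<noteq> z" using sF znot by auto
  have wG: "wfX X (contract S s t)" by (rule wfX_contract[OF S_wf]) (use sF st in \<open>auto simp: subdiv_simps\<close>)
  have pG: "p \<in> verts (contract S s t)" using pV sp by (simp add: contract_simps subdiv_simps)
  have zG: "z \<in> verts (contract S s t)" using sz by (simp add: contract_simps subdiv_simps)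
  have lx: "lab (contract S s t) x = p" using x sp by (simp add: contract_simps subdiv_simps)
  have EG: "edges (contract S s t) = (\<lambda>e. r ` e) ` (edges S - {{s,t}})"
    unfolding contract_simps r_def ..
  have zpS: "{z,p} \<in> edges S - {{s,t}}" using sz by (auto simp: subdiv_simps doubleton_eq_iff)
  have rzp: "r ` {z,p} = {z,p}" unfolding r_def using sz sp by auto
  have atp: "{e\<in>edges (contract S s t). p \<in> e} = {{z,p}}"
  proof (rule set_eqI, rule iffI)
    fix e assume "e \<in> {e\<in>edges (contract S s t). p \<in> e}"
    then obtain e0 where e0: "e0 \<in> edges S" "e = r ` e0" "p \<in> r ` e0" unfolding EG by auto
    then obtain y where y: "y \<in> e0" "r y = p" by auto
    have "y = p" using y(2) sp unfolding r_def by (auto split: if_splits)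
    then have "e0 = {z,p}" using S_at_p e0(1) y(1) by simp
    then show "e \<in> {{z,p}}" using e0(2) rzp by simp
  next
    fix e assume "e \<in> {{z,p}}"
    have "{z,p} \<in> (\<lambda>e. r ` e) ` (edges S - {{s,t}})" by (rule image_eqI[where f="\<lambda>e. r ` e", OF rzp[symmetric] zpS])
    then show "e \<in> {e\<in>edges (contract S s t). p \<in> e}" unfolding EG using \<open>e \<in> {{z,p}}\<close> by simp
  qed
  have zl: "\<not> labeled X (contract S s t) z"
  proof
    assume "labeled X (contract S s t) z"
    then obtain y where y: "y \<in> X" "z = lab (contract S s t) y"
      unfolding labeled_def by blast
    moreover have "lab (contract S s t) y = r (lab F y)" by (simp add: contract_simps subdiv_simps r_def)
    ultimately have "y \<in> X" "z = r (lab F y)" by simp_all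
    then show False using labF sF znot unfolding r_def by (auto split: if_splits)
  qed
  have sub3: "{e\<in>edges (contract S s t). z \<in> e} \<subseteq> {r ` {u1, z}, r ` {z, u2}, r ` {z, p}}"
  proof
    fix e assume "e \<in> {e\<in>edges (contract S s t). z \<in> e}"
    then obtain e0 where e0: "e0 \<in> edges S" "e = r ` e0" "z \<in> r ` e0" unfolding EG by auto
    then obtain y where y: "y \<in> e0" "r y = z" by auto
    have "y = z" using y(2) sz unfolding r_def by (auto split: if_splits)
    then have "z \<in> e0" using y(1) by simp
    then have "e0 \<in> {e \<in> edges S. z \<in> e}" using e0(1) by simp
    then have "e0 \<in> {{u1, z}, {z, u2}, {z, p}}" unfolding S_at_z .
    then show "e \<in> {r ` {u1, z}, r ` {z, u2}, r ` {z, p}}" using e0(2) by blast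
  qed
  have "degree (contract S s t) z \<le> 3"
    unfolding degree_def by (rule order_trans[OF card_mono[OF _ sub3] card3]) simp
  then show False using key_contra[OF v wG k pG zG x(1) lx x(2) atp zl] by simp
qed

lemma caseF_delete:
  assumes v: "v \<in> verts F" "v \<noteq> p" and x: "x \<in> X" "lab F x = p"
    and st: "{s,t} \<in> edges F" "{s,t} \<noteq> {u1,u2}" "s \<noteq> t"
    and k: "isoby X k (delete S s t) (add_edge F p v)"
  shows False
proof -
  have sF: "s \<in> verts F" "t \<in> verts F" using edgeF[OF st(1)] by auto
  have sz: "s \<noteq> z" "t \<noteq> z" using sF znot by auto
  have wG: "wfX X (delete S s t)" by (rule wfX_delete[OF S_wf])
  have pG: "p \<in> verts (delete S s t)" using pV by (simp add: delete_simps subdiv_simps)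
  have zG: "z \<in> verts (delete S s t)" by (simp add: delete_simps subdiv_simps)
  have lx: "lab (delete S s t) x = p" using x by (simp add: delete_simps subdiv_simps)
  have zpS: "{z,p} \<in> edges S - {{s,t}}" using sz by (auto simp: subdiv_simps doubleton_eq_iff)
  have atp: "{e\<in>edges (delete S s t). p \<in> e} = {{z,p}}"
  proof (rule set_eqI, rule iffI)
    fix e assume "e \<in> {e\<in>edges (delete S s t). p \<in> e}"
    then have "e \<in> edges S" "p \<in> e" by (simp_all add: delete_simps)
    then show "e \<in> {{z,p}}" using S_at_p by simp
  next
    fix e assume "e \<in> {{z,p}}"
    then show "e \<in> {e\<in>edges (delete S s t). p \<in> e}" using zpS by (simp add: delete_simps)
  qed
  have zl: "\<not> labeled X (delete S s t) z"
    using S_z_unlab unfolding labeled_def delete_simps .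
  have sub3: "{e\<in>edges (delete S s t). z \<in> e} \<subseteq> {{u1, z}, {z, u2}, {z, p}}"
  proof -
    have "{e\<in>edges (delete S s t). z \<in> e} \<subseteq> {e\<in>edges S. z \<in> e}" by (auto simp: delete_simps)
    then show ?thesis unfolding S_at_z .
  qed
  have "degree (delete S s t) z \<le> 3"
    unfolding degree_def by (rule order_trans[OF card_mono[OF _ sub3] card3]) simp
  then show False using key_contra[OF v wG k pG zG x(1) lx x(2) atp zl] by simp
qed

lemma case_zp:
  assumes v: "v \<in> verts F" "v \<noteq> p" and x: "x \<in> X" "lab F x = p"
    and k: "isoby X k (contract S z p) (add_edge F p v)"
  shows False
proof -
  define r where "r = (\<lambda>w. if w = p then z else w)"
  have wG: "wfX X (contract S z p)" by (rule wfX_contract[OF S_wf]) (use zne in \<open>auto simp: subdiv_simps\<close>)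
  have zG: "z \<in> verts (contract S z p)" using zne by (simp add: contract_simps subdiv_simps)
  have lx: "lab (contract S z p) x = z" using x by (simp add: contract_simps subdiv_simps)
  have b: "bij_betw k (verts (contract S z p)) (verts F)" and l: "\<forall>y\<in>X. k (lab (contract S z p) y) = lab F y"
    using k unfolding isoby_def add_edge_simps by auto
  have kz: "k z = p" using l x lx by auto
  have e1: "{u1,z} \<in> edges (contract S z p)"
  proof -
    have "{u1,z} \<in> edges S - {{z,p}}" using pu zne by (auto simp: subdiv_simps doubleton_eq_iff)
    moreover have "r ` {u1,z} = {u1,z}" unfolding r_def using pu zne by auto
    ultimately have "{u1,z} \<in> (\<lambda>e. r ` e) ` (edges S - {{z,p}})" by (metis image_eqI)
    then show ?thesis unfolding contract_simps r_def .
  qed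
  have e2: "{z,u2} \<in> edges (contract S z p)"
  proof -
    have "{z,u2} \<in> edges S - {{z,p}}" using pu zne by (auto simp: subdiv_simps doubleton_eq_iff)
    moreover have "r ` {z,u2} = {z,u2}" unfolding r_def using pu zne by auto
    ultimately have "{z,u2} \<in> (\<lambda>e. r ` e) ` (edges S - {{z,p}})" by (metis image_eqI)
    then show ?thesis unfolding contract_simps r_def .
  qed
  have "{{u1,z},{z,u2}} \<subseteq> {e\<in>edges (contract S z p). z \<in> e}" using e1 e2 by auto
  moreover have "finite {e\<in>edges (contract S z p). z \<in> e}" using wfX_fin[OF wG] by simp
  moreover have "card {{u1,z},{z,u2}} = 2" using uV(3) by (auto simp: doubleton_eq_iff)
  ultimately have "degree (contract S z p) z \<ge> 2" unfolding degree_def by (metis card_mono)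
  moreover have "degree (add_edge F p v) (k z) = degree (contract S z p) z" using iso_degree[OF wG k zG] .
  moreover have "degree (add_edge F p v) p = 1" unfolding degree_def Av_at_p by simp
  ultimately show False using kz by simp
qed

lemma safe_no_z: "safe_del X S s t \<Longrightarrow> s \<noteq> z \<and> t \<noteq> z"
  unfolding safe_del_def using S_z_unlab S_deg_z by auto

lemma case_u1:
  assumes v: "v \<in> verts F" "v \<noteq> p"
    and k: "isoby X k (contract S u1 z) (add_edge F p v)"
  shows "v = u1"
proof -
  have "isoby X (k \<circ> id) (add_edge F p u1) (add_edge F p v)" by (rule iso_comp[OF contract_S_u1 k])
  then have "u1 = v" by (rule add_edge_rigid[OF uV(1) pu(1)[symmetric] v])
  then show ?thesis by simp
qed

lemma forward:
  assumes v: "v \<in> verts F" "v \<noteq> p" and x: "x \<in> X" "lab F x = p"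
    and st: "{s,t} \<in> edges S" "s \<noteq> t"
    and G: "G = contract S s t \<or> (safe_del X S s t \<and> G = delete S s t)"
    and k: "isoby X k G (add_edge F p v)"
  shows "v \<in> {u1,u2}"
proof -
  interpret s2: setting X F p u2 u1 z
    by unfold_locales (use F pX isol e12 znot in \<open>simp_all add: insert_commute\<close>)
  have S2: "subdiv_attach F p u2 u1 z = S" by (rule subdiv_sym[symmetric])
  have stS: "s \<in> verts S" "t \<in> verts S" using S_wf st(1) unfolding wfX_def by auto
  show ?thesis
  proof (cases "G = delete S s t \<and> safe_del X S s t")
    case True
    then have "s \<noteq> z" "t \<noteq> z" using safe_no_z by auto
    then have "{s,t} \<in> edges F" "{s,t} \<noteq> {u1,u2}" using S_edge_cases[OF st(1)] by auto
    then show ?thesis using caseF_delete[OF v x _ _ st(2)] k True by blast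
  next
    case False
    then have Gc: "G = contract S s t" using G by blast
    have sw: "\<And>a b. a \<in> verts S \<Longrightarrow> b \<in> verts S \<Longrightarrow> a \<noteq> b \<Longrightarrow> isoby X k (contract S a b) (add_edge F p v)
          \<Longrightarrow> \<exists>k'. isoby X k' (contract S b a) (add_edge F p v)"
    proof -
      fix a b assume ab: "a \<in> verts S" "b \<in> verts S" "a \<noteq> b" and kk: "isoby X k (contract S a b) (add_edge F p v)"
      have "isoby X (\<lambda>w. if w = b then a else w) (contract S b a) (contract S a b)"
        by (rule contract_swap[OF ab])
      from iso_comp[OF this kk] show "\<exists>k'. isoby X k' (contract S b a) (add_edge F p v)" by blast
    qed
    consider (F) "{s,t} \<in> edges F" "{s,t} \<noteq> {u1,u2}" | (A) "{s,t} = {u1,z}" | (B) "{s,t} = {z,u2}" | (C) "{s,t} = {z,p}"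
      using S_edge_cases[OF st(1)] by blast
    then show ?thesis
    proof cases
      case F
      then show ?thesis using caseF_contract[OF v x _ _ st(2)] k Gc by blast
    next
      case A
      then have "(s = u1 \<and> t = z) \<or> (s = z \<and> t = u1)" by (auto simp: doubleton_eq_iff)
      then obtain k' where "isoby X k' (contract S u1 z) (add_edge F p v)"
      proof (elim disjE conjE)
        assume "s = u1" "t = z"
        then show thesis using that k Gc by blast
      next
        assume "s = z" "t = u1"
        then show thesis using that sw[of z u1] k Gc stS st(2) by blast
      qed
      then show ?thesis using case_u1[OF v] by blast
    next
      case B
      then have "(s = u2 \<and> t = z) \<or> (s = z \<and> t = u2)" by (auto simp: doubleton_eq_iff)
      then obtain k' where "isoby X k' (contract S u2 z) (add_edge F p v)"
      proof (elim disjE conjE)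
        assume "s = u2" "t = z"
        then show thesis using that k Gc by blast
      next
        assume "s = z" "t = u2"
        then show thesis using that sw[of z u2] k Gc stS st(2) by blast
      qed
      then have "v = u2" using s2.case_u1[OF v] unfolding S2 by blast
      then show ?thesis by simp
    next
      case C
      then have "(s = z \<and> t = p) \<or> (s = p \<and> t = z)" by (auto simp: doubleton_eq_iff)
      then obtain k' where "isoby X k' (contract S z p) (add_edge F p v)"
      proof (elim disjE conjE)
        assume "s = z" "t = p"
        then show thesis using that k Gc by blast
      next
        assume "s = p" "t = z"
        then show thesis using that sw[of p z] k Gc stS st(2) by blast
      qed
      then show ?thesis using case_zp[OF v x] by blast
    qed
  qed
qed

end


lemma Fijk_facts:
  assumes ct: "critical_triplet X Ci Cj Ck x w a b"
  shows "lab (Fijk Ci x w a) x = lab Ci x" "\<forall>e\<in>edges (Fijk Ci x w a). lab Ci x \<notin> e" "x \<in> X"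
proof -
  have Ci: "in_CX X Ci" using ct unfolding critical_triplet_def by simp
  show x: "x \<in> X" using ct unfolding critical_triplet_def by simp
  have d1: "degree Ci (lab Ci x) = 1" using ct unfolding critical_triplet_def by simp
  have pw: "{lab Ci x, w} \<in> edges Ci" using ct unfolding critical_triplet_def by simp
  have pnw: "lab Ci x \<noteq> w" using ct unfolding critical_triplet_def by simp
  have ie: "internal_edge Ci {w, a}" using ct unfolding critical_triplet_def by simp
  have wa: "w \<noteq> a" using ct unfolding critical_triplet_def by simp
  define p where "p = lab Ci x"
  define r where "r = (\<lambda>y. if y = a then w else y)"
  have fin: "finite (edges Ci)" using Ci unfolding in_CX_def using xforest_wfX wfX_fin by blast
  have da: "degree Ci a \<noteq> 1" using ie unfolding internal_edge_def by simp
  have pa: "p \<noteq> a" using d1 da unfolding p_def by auto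
  have Eq: "{e\<in>edges Ci. p \<in> e} = {{p,w}}"
  proof -
    have "card {e\<in>edges Ci. p \<in> e} = 1" using d1 unfolding degree_def p_def .
    then obtain e' where e': "{e\<in>edges Ci. p \<in> e} = {e'}" by (rule card_1_singletonE)
    moreover have "{p,w} \<in> {e\<in>edges Ci. p \<in> e}" using pw unfolding p_def by simp
    ultimately show ?thesis by simp
  qed
  have lc: "lab (contract Ci w a) x = p" unfolding contract_simps using pa unfolding p_def by simp
  have FF: "Fijk Ci x w a = delete (contract Ci w a) p w" unfolding Fijk_def lc ..
  show "lab (Fijk Ci x w a) x = lab Ci x" unfolding FF delete_simps lc p_def ..
  show "\<forall>e\<in>edges (Fijk Ci x w a). lab Ci x \<notin> e"
  proof
    fix e assume "e \<in> edges (Fijk Ci x w a)"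
    then have e: "e \<in> (\<lambda>e. r ` e) ` (edges Ci - {{w,a}})" "e \<noteq> {p,w}"
      unfolding FF delete_simps contract_simps r_def by auto
    then obtain e0 where e0: "e0 \<in> edges Ci" "e = r ` e0" by blast
    show "lab Ci x \<notin> e"
    proof
      assume "lab Ci x \<in> e"
      then obtain y where y: "y \<in> e0" "r y = p" using e0(2) unfolding p_def by auto
      have "y = p" using y(2) pnw unfolding r_def p_def by (auto split: if_splits)
      then have "e0 = {p,w}" using Eq e0(1) y(1) by blast
      then have "e = {p,w}" using e0(2) pa wa unfolding r_def by auto
      then show False using e(2) by simp
    qed
  qed
qed

theorem mainTheorem7:
  fixes n :: nat and Ci Cj Ck C :: xf and A :: "xf hat" and x w a b u1 u2 z v :: nat
  assumes "n \<ge> 5"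
    and "critical_triplet {1..n} Ci Cj Ck x w a b"
    and "in_CX {1..n} C" and "hlt {1..n} (Elem (Fijk Ci x w a)) (Elem C)"
    and "{u1, u2} \<in> edges (Fijk Ci x w a)" and "u1 \<noteq> u2"
    and "z \<notin> verts (Fijk Ci x w a)"
    and "fiso {1..n} C (subdiv_attach (Fijk Ci x w a) (lab (Fijk Ci x w a) x) u1 u2 z)"
    and "in_hat {1..n} A" and "hcovers {1..n} A (Elem (Fijk Ci x w a))"
    and "v \<in> verts (Fijk Ci x w a) - {lab (Fijk Ci x w a) x}"
    and "heq {1..n} A (Elem (add_edge (Fijk Ci x w a) (lab (Fijk Ci x w a) x) v))"
  shows "hcovers {1..n} (Elem C) A \<longleftrightarrow> v \<in> {u1, u2}"
proof -
  let ?X = "{1..n}"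
  let ?F = "Fijk Ci x w a"
  let ?p = "lab (Fijk Ci x w a) x"
  let ?S = "subdiv_attach ?F ?p u1 u2 z"
  let ?Av = "add_edge ?F ?p v"
  have FF: "lab ?F x = lab Ci x" "\<forall>e\<in>edges ?F. lab Ci x \<notin> e" "x \<in> ?X"
    using Fijk_facts[OF assms(2)] by auto
  have xX: "x \<in> ?X" using FF(3) .
  have isol: "\<forall>e\<in>edges ?F. ?p \<notin> e" using FF by simp
  have Fx: "xforest ?X ?F" using assms(10) unfolding hcovers_def in_hat_def by simp
  interpret st: setting ?X ?F ?p u1 u2 z
    by unfold_locales (use Fx xX isol assms(5,7) in auto)
  obtain q where Aq: "A = Elem q" and hq0: "fiso ?X q ?Av"
    using assms(12) by (cases A) auto
  have qx: "xforest ?X q" using assms(9) Aq unfolding in_hat_def by simp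
  have wq: "wfX ?X q" using qx by (rule xforest_wfX)
  obtain h where h: "isoby ?X h q ?Av" using hq0 unfolding fiso_iff by blast
  have Cx: "xforest ?X C" using assms(3) unfolding in_CX_def by simp
  have wC: "wfX ?X C" using Cx by (rule xforest_wfX)
  obtain f where f: "isoby ?X f C ?S" using assms(8) unfolding fiso_iff by blast
  have v: "v \<in> verts ?F" "v \<noteq> ?p" using assms(11) by auto
  have cC: "card (edges C) = card (edges ?F) + 2"
    using iso_card_edges[OF wC f] st.S_card by simp
  have cq: "card (edges q) = card (edges ?F) + 1"
    using iso_card_edges[OF wq h] st.Av_card by simp
  have bf: "bij_betw f (verts C) (verts ?S)" using f unfolding isoby_def by simp
  have injf: "inj_on f (verts C)" using bf bij_betw_def by blast
  define f' where "f' = inv_into (verts C) f"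
  have f': "isoby ?X f' ?S C" unfolding f'_def by (rule iso_sym[OF wC f])
  have nofisoC: "\<And>c. wfX ?X c \<Longrightarrow> fiso ?X C c \<Longrightarrow> fiso ?X c C"
    using iso_sym[OF wC] unfolding fiso_iff by blast
  show ?thesis
  proof
    assume cov: "hcovers ?X (Elem C) A"
    then have "fle ?X q C" unfolding hcovers_def hlt_def Aq by simp
    then obtain G where G: "(step ?X)\<^sup>*\<^sup>* G C" "fiso ?X G q" unfolding fle_def by blast
    have wG: "wfX ?X G" using steps_wfX[OF G(1) wC] by simp
    obtain g where g: "isoby ?X g G q" using G(2) unfolding fiso_iff by blast
    have cG: "card (edges G) = card (edges ?F) + 1" using iso_card_edges[OF wG g] cq by simp
    have stepG: "step ?X G C"
    proof -
      have "G = C \<or> (\<exists>y. (step ?X)\<^sup>*\<^sup>* G y \<and> step ?X y C)"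
        using G(1) by (induction rule: rtranclp.induct) auto
      moreover have "G \<noteq> C" using cG cC by auto
      ultimately obtain y where y: "(step ?X)\<^sup>*\<^sup>* G y" "step ?X y C" by blast
      have "wfX ?X y \<and> card (edges y) < card (edges C)" by (rule step_wfX[OF y(2) wC])
      then have "G = y \<or> card (edges G) < card (edges y)" using steps_wfX[OF y(1)] by blast
      moreover have "card (edges y) < card (edges C)" using step_wfX[OF y(2) wC] by simp
      ultimately have "G = y" using cG cC by auto
      then show ?thesis using y(2) by simp
    qed
    then obtain s' t' where st': "s' \<noteq> t'" "{s',t'} \<in> edges C"
      "G = contract C s' t' \<or> (safe_del ?X C s' t' \<and> G = delete C s' t')"
      unfolding step_def by blast
    have s'V: "s' \<in> verts C" "t' \<in> verts C" using wC st'(2) unfolding wfX_def by auto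
    define s t where "s = f s'" and "t = f t'"
    have sV: "s \<in> verts ?S" "t \<in> verts ?S" using bf s'V unfolding s_def t_def bij_betw_def by auto
    have fs: "f' s = s'" "f' t = t'" unfolding f'_def s_def t_def using injf s'V by (simp_all add: inv_into_f_f)
    have stS: "{s,t} \<in> edges ?S" unfolding s_def t_def using iso_edge[OF wC f s'V] st'(2) by simp
    have snt: "s \<noteq> t" unfolding s_def t_def using injf s'V st'(1) by (simp add: inj_on_eq_iff)
    have comp: "\<And>G'. isoby ?X f' G' G \<Longrightarrow> isoby ?X (h \<circ> g \<circ> f') G' ?Av"
      using g h iso_comp by blast
    have "\<exists>G' k. (G' = contract ?S s t \<or> (safe_del ?X ?S s t \<and> G' = delete ?S s t)) \<and> isoby ?X k G' ?Av"
    proof (cases "G = contract C s' t'")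
      case True
      have "isoby ?X f' (contract ?S s t) (contract C (f' s) (f' t))"
        by (rule iso_contract[OF st.S_wf f' sV snt])
      then have "isoby ?X f' (contract ?S s t) G" using True fs by simp
      then show ?thesis using comp by blast
    next
      case False
      then have sd: "safe_del ?X C s' t'" "G = delete C s' t'" using st'(3) by auto
      have "isoby ?X f' (delete ?S s t) (delete C (f' s) (f' t))"
        by (rule iso_delete[OF st.S_wf f' sV])
      then have i: "isoby ?X f' (delete ?S s t) G" using sd fs by simp
      have "safe_del ?X ?S s t"
        using sd(1) iso_labeled[OF wC f] iso_degree[OF wC f] s'V unfolding safe_del_def s_def t_def by simp
      then show ?thesis using comp i by blast
    qed
    then obtain G' k where "G' = contract ?S s t \<or> (safe_del ?X ?S s t \<and> G' = delete ?S s t)" "isoby ?X k G' ?Av"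
      by blast
    then show "v \<in> {u1,u2}" using st.forward[OF v xX refl stS snt] by blast
  next
    assume vu: "v \<in> {u1,u2}"
    interpret s2: setting ?X ?F ?p u2 u1 z
      by unfold_locales (use Fx xX isol assms(5,7) in \<open>auto simp: insert_commute\<close>)
    have S2: "subdiv_attach ?F ?p u2 u1 z = ?S" by (rule subdiv_sym[symmetric])
    have idv: "isoby ?X id ?Av (contract ?S v z)"
      using vu st.contract_S_u1 s2.contract_S_u1 unfolding S2 by auto
    have vzS: "{v,z} \<in> edges ?S" using vu by (auto simp: subdiv_simps insert_commute)
    have vS: "v \<in> verts ?S" "z \<in> verts ?S" "v \<noteq> z" using v st.znot by (auto simp: subdiv_simps)
    define s' t' where "s' = f' v" and "t' = f' z"
    have bf': "bij_betw f' (verts ?S) (verts C)" using f' unfolding isoby_def by simp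
    have s'V: "s' \<in> verts C" "t' \<in> verts C" using bf' vS unfolding s'_def t'_def bij_betw_def by auto
    have fs': "f s' = v" "f t' = z" unfolding s'_def t'_def f'_def using bf vS
      by (simp_all add: bij_betw_def f_inv_into_f)
    have s'nt': "s' \<noteq> t'" using fs' vS(3) by auto
    have eC: "{s',t'} \<in> edges C" using iso_edge[OF wC f s'V] vzS fs' by simp
    have i1: "isoby ?X f (contract C s' t') (contract ?S v z)"
      using iso_contract[OF wC f s'V s'nt'] fs' by simp
    have i2: "isoby ?X (inv_into (verts ?Av) id) (contract ?S v z) ?Av"
      by (rule iso_sym[OF st.Av_wf[OF v(1)] idv])
    have i3: "isoby ?X (inv_into (verts q) h) ?Av q" by (rule iso_sym[OF wq h])
    have "fiso ?X (contract C s' t') q" unfolding fiso_iff using iso_comp[OF iso_comp[OF i1 i2] i3] by blast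
    moreover have "step ?X (contract C s' t') C" unfolding step_def using s'nt' eC by blast
    ultimately have fqC: "fle ?X q C" unfolding fle_def by blast
    have nqC: "\<not> fiso ?X q C"
    proof
      assume "fiso ?X q C"
      then obtain k where "isoby ?X k q C" unfolding fiso_iff by blast
      then show False using iso_card_edges[OF wq] cq cC by fastforce
    qed
    have noint: "\<not> (\<exists>c. in_hat ?X c \<and> hlt ?X A c \<and> hlt ?X c (Elem C))"
    proof
      assume "\<exists>c. in_hat ?X c \<and> hlt ?X A c \<and> hlt ?X c (Elem C)"
      then obtain c where c: "in_hat ?X c" "hlt ?X A c" "hlt ?X c (Elem C)" by blast
      then obtain c' where c': "c = Elem c'" unfolding Aq hlt_def by (cases c) auto
      have wc: "wfX ?X c'" using c(1) c' xforest_wfX unfolding in_hat_def by blast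
      have l1: "fle ?X q c'" "\<not> fiso ?X q c'" using c(2) c' Aq unfolding hlt_def by auto
      have l2: "fle ?X c' C" "\<not> fiso ?X c' C" using c(3) c' unfolding hlt_def by auto
      obtain G2 where G2: "(step ?X)\<^sup>*\<^sup>* G2 C" "fiso ?X G2 c'" using l2(1) unfolding fle_def by blast
      have w2: "wfX ?X G2 \<and> (G2 = C \<or> card (edges G2) < card (edges C))" by (rule steps_wfX[OF G2(1) wC])
      have "G2 \<noteq> C" using G2(2) nofisoC w2 wc l2(2) by metis
      then have c2: "card (edges G2) < card (edges C)" using w2 by simp
      obtain k2 where k2: "isoby ?X k2 G2 c'" using G2(2) unfolding fiso_iff by blast
      have cc': "card (edges c') = card (edges G2)" using iso_card_edges[OF _ k2] w2 by simp
      obtain G1 where G1: "(step ?X)\<^sup>*\<^sup>* G1 c'" "fiso ?X G1 q" using l1(1) unfolding fle_def by blast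
      have w1: "wfX ?X G1 \<and> (G1 = c' \<or> card (edges G1) < card (edges c'))" by (rule steps_wfX[OF G1(1) wc])
      have "G1 \<noteq> c'"
      proof
        assume "G1 = c'"
        then obtain k where "isoby ?X k c' q" using G1(2) unfolding fiso_iff by blast
        then have "isoby ?X (inv_into (verts c') k) q c'" by (rule iso_sym[OF wc])
        then show False using l1(2) unfolding fiso_iff by blast
      qed
      then have c1: "card (edges G1) < card (edges c')" using w1 by simp
      obtain k1 where k1: "isoby ?X k1 G1 q" using G1(2) unfolding fiso_iff by blast
      have "card (edges q) = card (edges G1)" using iso_card_edges[OF _ k1] w1 by simp
      then show False using c1 c2 cc' cq cC by simp
    qed
    have ihC: "in_hat ?X (Elem C)" using Cx unfolding in_hat_def by simp
    have "hlt ?X A (Elem C)" unfolding Aq hlt_def using fqC nqC by simp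
    then show "hcovers ?X (Elem C) A"
      unfolding hcovers_def using ihC assms(9) noint by blast
  qed
qed


end
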